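(* Let $G$ be a structured quadratic-bilinear system given by $(\mathcal C,\mathcal K,\mathcal B,\mathcal N,\mathcal H)$ with structured symmetric subsystem transfer functions $G_k$, and let $\widehat G$ be the reduced-order system obtained by projection with basis matrices $V,W\in\mathbb C^{n\times r}$, with reduced symmetric subsystem transfer functions $\widehat G_k$. Let $\sigma_1,\sigma_2\in\mathbb C$ be such that $\mathcal C,\mathcal K,\mathcal B,\mathcal N,\mathcal H$ can be evaluated at $\sigma_1$, $\sigma_2$, $\sigma_1+\sigma_2$ (resp. at the pairs $(\sigma_1,\sigma_2),(\sigma_2,\sigma_1)$ for $\mathcal H$) and $\mathcal K(\sigma_1),\mathcal K(\sigma_2),\mathcal K(\sigma_1+\sigma_2)$ are invertible. Define $$V_{1,1}=\mathcal K(\sigma_1)^{-1}\mathcal B(\sigma_1),\quad V_{1,2}=\mathcal K(\sigma_2)^{-1}\mathcal B(\sigma_2),$$ $$V_2=\mathcal K(\sigma_1+\sigma_2)^{-1}\big(\mathcal H(\sigma_1,\sigma_2)(V_{1,1}\otimes V_{1,2})+\mathcal H(\sigma_2,\sigma_1)(V_{1,2}\otimes V_{1,1})+\mathcal N(\sigma_1)(I_m\otimes V_{1,1})+\mathcal N(\sigma_2)(I_m\otimes V_{1,2})\big).$$ Suppose $\operatorname{span}(V)\supseteq\operatorname{span}([V_{1,1}\ V_{1,2}\ V_2])$, $V$ has full column rank, and $W\in\mathbb C^{n\times r}$ is an arbitrary full-rank matrix such that $W^{\mathsf H}\mathcal K(s)V$ is invertible for $s\in\{\sigma_1,\sigma_2,\sigma_1+\sigma_2\}$.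 Then $$G_1(\sigma_1)=\widehat G_1(\sigma_1),\qquad G_1(\sigma_2)=\widehat G_1(\sigma_2),\qquad G_2(\sigma_1,\sigma_2)=\widehat G_2(\sigma_1,\sigma_2).$$
   Context: A structured quadratic-bilinear system (in frequency domain) with $n$ states, $m$ inputs and $p$ outputs is given by matrix-valued functions $\mathcal C:\mathbb C\to\mathbb C^{p\times n}$, $\mathcal K:\mathbb C\to\mathbb C^{n\times n}$, $\mathcal B:\mathbb C\to\mathbb C^{n\times m}$, $\mathcal N:\mathbb C\to\mathbb C^{n\times nm}$ with $\mathcal N(s)=[\mathcal N_1(s)\ \cdots\ \mathcal N_m(s)]$, $\mathcal N_j(s)\in\mathbb C^{n\times n}$, and $\mathcal H:\mathbb C\times\mathbb C\to\mathbb C^{n\times n^2}$. Its structured symmetric subsystem transfer functions are $G_1(s_1)=\mathcal C(s_1)g_1(s_1)$, $G_2(s_1,s_2)=\mathcal C(s_1+s_2)g_2(s_1,s_2)$, $G_3(s_1,s_2,s_3)=\mathcal C(s_1+s_2+s_3)g_3(s_1,s_2,s_3)$, where $g_1(s_1)=\mathcal K(s_1)^{-1}\mathcal B(s_1)$, $g_2(s_1,s_2)=\tfrac12\mathcal K(s_1+s_2)^{-1}\big(\mathcal H(s_1,s_2)(g_1(s_1)\otimes g_1(s_2))+\mathcal H(s_2,s_1)(g_1(s_2)\otimes g_1(s_1))+\mathcal N(s_1)(I_m\otimes g_1(s_1))+\mathcal N(s_2)(I_m\otimes g_1(s_2))\big)$, $g_3(s_1,s_2,s_3)=\tfrac16\mathcal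 K(s_1+s_2+s_3)^{-1}\big(\mathcal H(s_1+s_2,s_3)(g_2(s_1,s_2)\otimes g_1(s_3))+\mathcal H(s_1+s_3,s_2)(g_2(s_1,s_3)\otimes g_1(s_2))+\mathcal H(s_2+s_3,s_1)(g_2(s_2,s_3)\otimes g_1(s_1))+\mathcal H(s_1,s_2+s_3)(g_1(s_1)\otimes g_2(s_2,s_3))+\mathcal H(s_2,s_1+s_3)(g_1(s_2)\otimes g_2(s_1,s_3))+\mathcal H(s_3,s_1+s_2)(g_1(s_3)\otimes g_2(s_1,s_2))+\mathcal N(s_1+s_2)(I_m\otimes g_2(s_1,s_2))+\mathcal N(s_1+s_3)(I_m\otimes g_2(s_1,s_3))+\mathcal N(s_2+s_3)(I_m\otimes g_2(s_2,s_3))\big)$, wherever the inverses exist; $\otimes$ is the Kronecker product. The reduced-order system obtained by projection with $V,W\in\mathbb C^{n\times r}$ is given by $\widehat{\mathcal C}(s)=\mathcal C(s)V$, $\widehat{\mathcal K}(s)=W^{\mathsf H}\mathcal K(s)V$, $\widehat{\mathcal B}(s)=W^{\mathsf H}\mathcal B(s)$, $\widehat{\mathcal N}(s)=W^{\mathsf H}\mathcal N(s)(I_m\otimes V)=[W^{\mathsf H}\mathcal N_1(s)V\ \cdots\ W^{\mathsf H}\mathcal N_m(s)V]$, $\widehat{\mathcal H}(s_1,s_2)=W^{\mathsf H}\mathcal H(s_1,s_2)(V\otimes V)$, where $W^{\mathsf H}$ is the conjugate transpose; its transfer functions $\widehat G_k$ are defined by the same formulas with hatted functions (dimension $r$ in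 place of $n$). *)

theory Defs
  imports "Jordan_Normal_Form.Schur_Decomposition" "Jordan_Normal_Form.DL_Rank"
begin

definition kron :: "'a :: times mat \<Rightarrow> 'a mat \<Rightarrow> 'a mat" where
  "kron A B = mat (dim_row A * dim_row B) (dim_col A * dim_col B)
     (\<lambda>(i,j). A $$ (i div dim_row B, j div dim_col B) * B $$ (i mod dim_row B, j mod dim_col B))"

definition mat_inv :: "'a :: semiring_1 mat \<Rightarrow> 'a mat" where
  "mat_inv A = (SOME B. B \<in> carrier_mat (dim_row A) (dim_row A) \<and> inverts_mat A B \<and> inverts_mat B A)"

definition col_span :: "'a :: semiring_1 mat \<Rightarrow> 'a vec set" where
  "col_span M = {M *\<^sub>v x | x. x \<in> carrier_vec (dim_col M)}"

definition hcat3 :: "nat \<Rightarrow> 'a mat \<Rightarrow> 'a mat \<Rightarrow> 'a mat \<Rightarrow> 'a mat" where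
  "hcat3 n A B C = mat_of_cols n (cols A @ cols B @ cols C)"

definition qb_g1 :: "(complex \<Rightarrow> complex mat) \<Rightarrow> (complex \<Rightarrow> complex mat) \<Rightarrow> complex \<Rightarrow> complex mat" where
  "qb_g1 K B s1 = mat_inv (K s1) * B s1"

definition qb_g2 :: "nat \<Rightarrow> (complex \<Rightarrow> complex mat) \<Rightarrow> (complex \<Rightarrow> complex mat)
    \<Rightarrow> (complex \<Rightarrow> complex mat) \<Rightarrow> (complex \<Rightarrow> complex \<Rightarrow> complex mat)
    \<Rightarrow> complex \<Rightarrow> complex \<Rightarrow> complex mat" where
  "qb_g2 m K B N H s1 s2 = (1/2) \<cdot>\<^sub>m (mat_inv (K (s1 + s2)) *
     (H s1 s2 * kron (qb_g1 K B s1) (qb_g1 K B s2)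
      + H s2 s1 * kron (qb_g1 K B s2) (qb_g1 K B s1)
      + N s1 * kron (1\<^sub>m m) (qb_g1 K B s1)
      + N s2 * kron (1\<^sub>m m) (qb_g1 K B s2)))"

definition qb_G1 :: "(complex \<Rightarrow> complex mat) \<Rightarrow> (complex \<Rightarrow> complex mat) \<Rightarrow> (complex \<Rightarrow> complex mat)
    \<Rightarrow> complex \<Rightarrow> complex mat" where
  "qb_G1 C K B s1 = C s1 * qb_g1 K B s1"

definition qb_G2 :: "nat \<Rightarrow> (complex \<Rightarrow> complex mat) \<Rightarrow> (complex \<Rightarrow> complex mat) \<Rightarrow> (complex \<Rightarrow> complex mat)
    \<Rightarrow> (complex \<Rightarrow> complex mat) \<Rightarrow> (complex \<Rightarrow> complex \<Rightarrow> complex mat)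
    \<Rightarrow> complex \<Rightarrow> complex \<Rightarrow> complex mat" where
  "qb_G2 m C K B N H s1 s2 = C (s1 + s2) * qb_g2 m K B N H s1 s2"

definition red_C :: "(complex \<Rightarrow> complex mat) \<Rightarrow> complex mat \<Rightarrow> complex \<Rightarrow> complex mat" where
  "red_C C V s = C s * V"
definition red_K :: "(complex \<Rightarrow> complex mat) \<Rightarrow> complex mat \<Rightarrow> complex mat \<Rightarrow> complex \<Rightarrow> complex mat" where
  "red_K K V W s = mat_adjoint W * K s * V"
definition red_B :: "(complex \<Rightarrow> complex mat) \<Rightarrow> complex mat \<Rightarrow> complex \<Rightarrow> complex mat" where
  "red_B B W s = mat_adjoint W * B s"
definition red_N :: "nat \<Rightarrow> (complex \<Rightarrow> complex mat) \<Rightarrow> complex mat \<Rightarrow> complex mat \<Rightarrow> complex \<Rightarrow> complex mat" where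
  "red_N m N V W s = mat_adjoint W * N s * kron (1\<^sub>m m) V"
definition red_H :: "(complex \<Rightarrow> complex \<Rightarrow> complex mat) \<Rightarrow> complex mat \<Rightarrow> complex mat
    \<Rightarrow> complex \<Rightarrow> complex \<Rightarrow> complex mat" where
  "red_H H V W s1 s2 = mat_adjoint W * H s1 s2 * kron V V"

end

theory Submission
  imports Defs
begin
lemma sum_lessThan_add_nat: "(\<Sum>k<m+(n::nat). f k) = (\<Sum>k<m. f k) + (\<Sum>j<n. (f (m+j)::'a::comm_monoid_add))"
  by (induction n) (auto simp: add.assoc)

lemma sum_split: "(\<Sum>k<(a::nat)*b. f k) = (\<Sum>i<a. \<Sum>j<b. (f (i*b+j)::'a::comm_monoid_add))"
proof (induction a)
  case 0 then show ?case by simp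
next
  case (Suc a)
  have "(\<Sum>k<Suc a*b. f k) = (\<Sum>k<a*b + b. f k)" by (simp add: add.commute)
  also have "\<dots> = (\<Sum>k<a*b. f k) + (\<Sum>j<b. f (a*b+j))" by (rule sum_lessThan_add_nat)
  finally show ?case using Suc by simp
qed

lemma kron_carrier: "kron A B \<in> carrier_mat (dim_row A * dim_row B) (dim_col A * dim_col B)"
  unfolding kron_def by simp

lemma kron_mult:
  fixes A C B D :: "'a::comm_ring_1 mat"
  assumes A: "A \<in> carrier_mat ra ca" and C: "C \<in> carrier_mat ca cc"
    and B: "B \<in> carrier_mat rb cb" and D: "D \<in> carrier_mat cb cd"
  shows "kron A B * kron C D = kron (A * C) (B * D)"
proof (rule eq_matI)
  fix i j assume i: "i < dim_row (kron (A*C) (B*D))" and j: "j < dim_col (kron (A*C) (B*D))"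
  have i': "i < ra * rb" and j': "j < cc * cd" using i j A B C D by (auto simp: kron_def)
  have rb0: "rb > 0" and cd0: "cd > 0" using i' j' by (auto intro: Nat.gr0I)
  have idiv: "i div rb < ra" "i mod rb < rb" using i' rb0 by (auto simp: less_mult_imp_div_less)
  have jdiv: "j div cd < cc" "j mod cd < cd" using j' cd0 by (auto simp: less_mult_imp_div_less)
  have "(kron A B * kron C D) $$ (i, j) = row (kron A B) i \<bullet> col (kron C D) j"
    using i' j' A B C D by (simp add: kron_def)
  also have "\<dots> = (\<Sum>k< ca*cb. A $$ (i div rb, k div cb) * B $$ (i mod rb, k mod cb)
      * (C $$ (k div cb, j div cd) * D $$ (k mod cb, j mod cd)))"
    using i' j' A B C D unfolding scalar_prod_def
    by (auto simp: kron_def intro!: sum.cong)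
  also have "\<dots> = (\<Sum>a<ca. \<Sum>b<cb. A $$ (i div rb, a) * B $$ (i mod rb, b)
      * (C $$ (a, j div cd) * D $$ (b, j mod cd)))"
    unfolding sum_split
  proof (intro sum.cong refl)
    fix a b assume "a \<in> {..<ca}" "b \<in> {..<cb}"
    then have "(a*cb+b) div cb = a" "(a*cb+b) mod cb = b" by auto
    then show "A $$ (i div rb, (a * cb + b) div cb) * B $$ (i mod rb, (a * cb + b) mod cb) *
         (C $$ ((a * cb + b) div cb, j div cd) * D $$ ((a * cb + b) mod cb, j mod cd)) =
         A $$ (i div rb, a) * B $$ (i mod rb, b) * (C $$ (a, j div cd) * D $$ (b, j mod cd))"
      by simp
  qed
  also have "\<dots> = (\<Sum>a<ca. A $$ (i div rb, a) * C $$ (a, j div cd)) *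
                   (\<Sum>b<cb. B $$ (i mod rb, b) * D $$ (b, j mod cd))"
    by (simp add: sum_product ac_simps)
  also have "\<dots> = kron (A * C) (B * D) $$ (i, j)"
    using i' j' A B C D idiv jdiv unfolding kron_def
    by (simp add: scalar_prod_def atLeast0LessThan)
  finally show "(kron A B * kron C D) $$ (i, j) = kron (A * C) (B * D) $$ (i, j)" .
qed (insert A B C D, auto simp: kron_def)
lemma mat_inv_props:
  fixes A :: "'a::semiring_1 mat"
  assumes "invertible_mat A" "A \<in> carrier_mat n n"
  shows "mat_inv A \<in> carrier_mat n n" "mat_inv A * A = 1\<^sub>m n" "A * mat_inv A = 1\<^sub>m n"
proof -
  obtain B where B: "inverts_mat A B" "inverts_mat B A" using assms(1) unfolding invertible_mat_def by blast
  have Bc: "B \<in> carrier_mat n n"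
    using B assms(2) unfolding inverts_mat_def
    by (metis carrier_matD(1,2) carrier_matI index_mult_mat(2,3) index_one_mat(2,3))
  have "\<exists>B. B \<in> carrier_mat (dim_row A) (dim_row A) \<and> inverts_mat A B \<and> inverts_mat B A"
    using B Bc assms(2) by auto
  from someI_ex[OF this] have X: "mat_inv A \<in> carrier_mat n n" "inverts_mat A (mat_inv A)" "inverts_mat (mat_inv A) A"
    unfolding mat_inv_def[symmetric] using assms(2) by auto
  show "mat_inv A \<in> carrier_mat n n" using X by auto
  show "mat_inv A * A = 1\<^sub>m n" using X unfolding inverts_mat_def by auto
  show "A * mat_inv A = 1\<^sub>m n" using X assms(2) unfolding inverts_mat_def by auto
qed

lemma adjoint_carrier: "W \<in> carrier_mat n r \<Longrightarrow> mat_adjoint W \<in> carrier_mat r n"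
  unfolding mat_adjoint_def by auto

lemma col_in_span: "j < dim_col M \<Longrightarrow> col M j \<in> col_span M"
  unfolding col_span_def
  by (rule CollectI, rule exI[of _ "unit_vec (dim_col M) j"])
     (auto intro!: eq_vecI simp: scalar_prod_right_unit)

lemma span_factor:
  fixes M V :: "'a::field mat"
  assumes M: "M \<in> carrier_mat n k" and V: "V \<in> carrier_mat n r"
    and sp: "\<And>j. j < k \<Longrightarrow> col M j \<in> col_span V"
  shows "\<exists>Y. Y \<in> carrier_mat r k \<and> M = V * Y"
proof -
  have "\<forall>j. \<exists>y. j < k \<longrightarrow> y \<in> carrier_vec r \<and> col M j = V *\<^sub>v y"
    using sp V unfolding col_span_def by fastforce
  then obtain y where y: "\<And>j. j < k \<Longrightarrow> y j \<in> carrier_vec r \<and> col M j = V *\<^sub>v y j" by metis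
  define Y where "Y = mat r k (\<lambda>(i,j). y j $ i)"
  have "M = V * Y"
  proof (rule eq_matI)
    fix i j assume i: "i < dim_row (V*Y)" and j: "j < dim_col (V*Y)"
    have "col Y j = y j" using y[of j] j V unfolding Y_def by (auto intro!: eq_vecI)
    then have "(V*Y) $$ (i,j) = (V *\<^sub>v y j) $ i" using i j V unfolding Y_def by auto
    also have "\<dots> = col M j $ i" using y[of j] j V unfolding Y_def by auto
    also have "\<dots> = M $$ (i,j)" using i j M V unfolding Y_def by auto
    finally show "M $$ (i,j) = (V*Y) $$ (i,j)" by simp
  qed (insert M V, auto simp: Y_def)
  moreover have "Y \<in> carrier_mat r k" unfolding Y_def by auto
  ultimately show ?thesis by blast
qed

lemma proj:
  fixes V W Ks Y :: "complex mat"
  assumes V: "V \<in> carrier_mat n r" and W: "W \<in> carrier_mat n r" and Ks: "Ks \<in> carrier_mat n n"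
    and Y: "Y \<in> carrier_mat r k"
    and inv: "invertible_mat (mat_adjoint W * Ks * V)"
  shows "V * (mat_inv (mat_adjoint W * Ks * V) * (mat_adjoint W * (Ks * (V * Y)))) = V * Y"
proof -
  have Wa: "mat_adjoint W \<in> carrier_mat r n" using W by (rule adjoint_carrier)
  have Kr: "mat_adjoint W * Ks * V \<in> carrier_mat r r" using Wa Ks V by auto
  have "mat_adjoint W * (Ks * (V * Y)) = (mat_adjoint W * Ks * V) * Y"
  proof -
    have KV: "Ks * V \<in> carrier_mat n r" using Ks V by auto
    show ?thesis
      using assoc_mult_mat[OF Ks V Y] assoc_mult_mat[OF Wa KV Y] assoc_mult_mat[OF Wa Ks V] by simp
  qed
  then have "mat_inv (mat_adjoint W * Ks * V) * (mat_adjoint W * (Ks * (V * Y)))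
     = (mat_inv (mat_adjoint W * Ks * V) * (mat_adjoint W * Ks * V)) * Y"
    using mat_inv_props[OF inv Kr] Kr Y assoc_mult_mat[OF mat_inv_props(1)[OF inv Kr] Kr Y] by simp
  also have "\<dots> = Y" using mat_inv_props[OF inv Kr] Y by simp
  finally show ?thesis by simp
qed

lemma red_g1:
  fixes V W :: "complex mat" and K B :: "complex \<Rightarrow> complex mat"
  assumes V: "V \<in> carrier_mat n r" and W: "W \<in> carrier_mat n r" and Ks: "K s \<in> carrier_mat n n"
    and Bs: "B s \<in> carrier_mat n m" and Y: "Y \<in> carrier_mat r m"
    and invK: "invertible_mat (K s)"
    and inv: "invertible_mat (mat_adjoint W * K s * V)"
    and eq: "qb_g1 K B s = V * Y"
  shows "V * qb_g1 (red_K K V W) (red_B B W) s = qb_g1 K B s"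
proof -
  have "B s = K s * qb_g1 K B s"
    using mat_inv_props[OF invK Ks] Ks Bs assoc_mult_mat[OF Ks _ Bs, of "mat_inv (K s)"] unfolding qb_g1_def
    by simp
  then have "qb_g1 (red_K K V W) (red_B B W) s
      = mat_inv (mat_adjoint W * K s * V) * (mat_adjoint W * (K s * (V * Y)))"
    unfolding red_K_def red_B_def qb_g1_def[of "red_K K V W"] using eq by simp
  then show ?thesis using proj[OF V W Ks Y inv] eq by simp
qed
lemma hcat3_sub:
  fixes A B D :: "'a::semiring_1 mat"
  assumes A: "A \<in> carrier_mat n a" and B: "B \<in> carrier_mat n b" and D: "D \<in> carrier_mat n c"
    and sub: "col_span (hcat3 n A B D) \<subseteq> X"
  shows "\<And>j. j < a \<Longrightarrow> col A j \<in> X" "\<And>j. j < b \<Longrightarrow> col B j \<in> X"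
    "\<And>j. j < c \<Longrightarrow> col D j \<in> X"
proof -
  define L where "L = cols A @ cols B @ cols D"
  have Lc: "set L \<subseteq> carrier_vec n" using A B D unfolding L_def by (auto simp: cols_def)
  have len: "length L = a + b + c" using A B D unfolding L_def by auto
  have key: "\<And>i. i < a + b + c \<Longrightarrow> L ! i \<in> X"
  proof -
    fix i assume i: "i < a + b + c"
    have "col (hcat3 n A B D) i \<in> col_span (hcat3 n A B D)"
      by (rule col_in_span) (use i len A B D in \<open>simp add: hcat3_def\<close>)
    moreover have "col (hcat3 n A B D) i = L ! i"
      unfolding hcat3_def L_def[symmetric] using i len Lc by (auto intro!: col_mat_of_cols)
    ultimately show "L ! i \<in> X" using sub by auto
  qed
  show "\<And>j. j < a \<Longrightarrow> col A j \<in> X"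
  proof -
    fix j assume j: "j < a"
    have "L ! j = col A j" using j A unfolding L_def by (simp add: nth_append)
    then show "col A j \<in> X" using key[of j] j by simp
  qed
  show "\<And>j. j < b \<Longrightarrow> col B j \<in> X"
  proof -
    fix j assume j: "j < b"
    have "L ! (a + j) = col B j" using j A B unfolding L_def by (simp add: nth_append)
    then show "col B j \<in> X" using key[of "a+j"] j by simp
  qed
  show "\<And>j. j < c \<Longrightarrow> col D j \<in> X"
  proof -
    fix j assume j: "j < c"
    have "L ! (a + b + j) = col D j" using j A B D unfolding L_def by (simp add: nth_append)
    then show "col D j \<in> X" using key[of "a+b+j"] j by simp
  qed
qed

lemma term_eq:
  fixes Wa M A B X Y :: "complex mat"
  assumes Wa: "Wa \<in> carrier_mat r n" and M: "M \<in> carrier_mat n (a*b)"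
    and A: "A \<in> carrier_mat a c" and B: "B \<in> carrier_mat b d"
    and X: "X \<in> carrier_mat c e" and Y: "Y \<in> carrier_mat d f"
  shows "Wa * M * kron A B * kron X Y = Wa * (M * kron (A*X) (B*Y))"
proof -
  have kAB: "kron A B \<in> carrier_mat (a*b) (c*d)" using kron_carrier[of A B] A B by auto
  have kXY: "kron X Y \<in> carrier_mat (c*d) (e*f)" using kron_carrier[of X Y] X Y by auto
  have WM: "Wa * M \<in> carrier_mat r (a*b)" using Wa M by auto
  have "Wa * M * kron A B * kron X Y = Wa * M * (kron A B * kron X Y)"
    using assoc_mult_mat[OF WM kAB kXY] .
  also have "\<dots> = Wa * M * kron (A*X) (B*Y)" using kron_mult[OF A X B Y] by simp
  also have "\<dots> = Wa * (M * kron (A*X) (B*Y))"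
    using assoc_mult_mat[OF Wa M, of "kron (A*X) (B*Y)" "e*f"] kron_carrier[of "A*X" "B*Y"] A B X Y by auto
  finally show ?thesis .
qed

theorem proposition4p1:
  fixes n r m p :: nat
    and C K B N :: "complex \<Rightarrow> complex mat"
    and H :: "complex \<Rightarrow> complex \<Rightarrow> complex mat"
    and V W :: "complex mat"
    and \<sigma>1 \<sigma>2 :: complex
  assumes dimC: "\<And>s. C s \<in> carrier_mat p n"
    and dimK: "\<And>s. K s \<in> carrier_mat n n"
    and dimB: "\<And>s. B s \<in> carrier_mat n m"
    and dimN: "\<And>s. N s \<in> carrier_mat n (n * m)"
    and dimH: "\<And>s1 s2. H s1 s2 \<in> carrier_mat n (n * n)"
    and dimV: "V \<in> carrier_mat n r"
    and dimW: "W \<in> carrier_mat n r"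
    and invK1: "invertible_mat (K \<sigma>1)"
    and invK2: "invertible_mat (K \<sigma>2)"
    and invK12: "invertible_mat (K (\<sigma>1 + \<sigma>2))"
    and span: "let V11 = mat_inv (K \<sigma>1) * B \<sigma>1;
                   V12 = mat_inv (K \<sigma>2) * B \<sigma>2;
                   V2 = mat_inv (K (\<sigma>1 + \<sigma>2)) *
                          (H \<sigma>1 \<sigma>2 * kron V11 V12 + H \<sigma>2 \<sigma>1 * kron V12 V11
                           + N \<sigma>1 * kron (1\<^sub>m m) V11 + N \<sigma>2 * kron (1\<^sub>m m) V12)
               in col_span (hcat3 n V11 V12 V2) \<subseteq> col_span V"
    and rankV: "vec_space.rank n V = r"
    and rankW: "vec_space.rank n W = r"
    and invKr: "\<And>s. s \<in> {\<sigma>1, \<sigma>2, \<sigma>1 + \<sigma>2} \<Longrightarrow> invertible_mat (mat_adjoint W * K s * V)"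
  shows "qb_G1 C K B \<sigma>1 = qb_G1 (red_C C V) (red_K K V W) (red_B B W) \<sigma>1
    \<and> qb_G1 C K B \<sigma>2 = qb_G1 (red_C C V) (red_K K V W) (red_B B W) \<sigma>2
    \<and> qb_G2 m C K B N H \<sigma>1 \<sigma>2
         = qb_G2 m (red_C C V) (red_K K V W) (red_B B W) (red_N m N V W) (red_H H V W) \<sigma>1 \<sigma>2"
proof -
  define Wa where "Wa = mat_adjoint W"
  define V11 where "V11 = mat_inv (K \<sigma>1) * B \<sigma>1"
  define V12 where "V12 = mat_inv (K \<sigma>2) * B \<sigma>2"
  define S where "S = H \<sigma>1 \<sigma>2 * kron V11 V12 + H \<sigma>2 \<sigma>1 * kron V12 V11
                           + N \<sigma>1 * kron (1\<^sub>m m) V11 + N \<sigma>2 * kron (1\<^sub>m m) V12"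
  define V2 where "V2 = mat_inv (K (\<sigma>1 + \<sigma>2)) * S"
  have Wa: "Wa \<in> carrier_mat r n" unfolding Wa_def using dimW by (rule adjoint_carrier)
  have V11c: "V11 \<in> carrier_mat n m" unfolding V11_def using mat_inv_props(1)[OF invK1 dimK] dimB by auto
  have V12c: "V12 \<in> carrier_mat n m" unfolding V12_def using mat_inv_props(1)[OF invK2 dimK] dimB by auto
  have Nc: "\<And>s. N s \<in> carrier_mat n (m*n)" using dimN by (simp add: mult.commute)
  have P1: "H \<sigma>1 \<sigma>2 * kron (V11) V12 \<in> carrier_mat n (m*m)"
  proof -
    have "kron (V11) V12 \<in> carrier_mat (n*n) (m*m)" using kron_carrier[of "V11" V12] V11c V12c by auto
    then show ?thesis by (rule mult_carrier_mat[OF dimH])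
  qed
  have P2: "H \<sigma>2 \<sigma>1 * kron (V12) V11 \<in> carrier_mat n (m*m)"
  proof -
    have "kron (V12) V11 \<in> carrier_mat (n*n) (m*m)" using kron_carrier[of "V12" V11] V11c V12c by auto
    then show ?thesis by (rule mult_carrier_mat[OF dimH])
  qed
  have P3: "N \<sigma>1 * kron (1\<^sub>m m) V11 \<in> carrier_mat n (m*m)"
  proof -
    have "kron (1\<^sub>m m) V11 \<in> carrier_mat (m*n) (m*m)" using kron_carrier[of "1\<^sub>m m" V11] V11c V12c by auto
    then show ?thesis by (rule mult_carrier_mat[OF Nc])
  qed
  have P4: "N \<sigma>2 * kron (1\<^sub>m m) V12 \<in> carrier_mat n (m*m)"
  proof -
    have "kron (1\<^sub>m m) V12 \<in> carrier_mat (m*n) (m*m)" using kron_carrier[of "1\<^sub>m m" V12] V11c V12c by auto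
    then show ?thesis by (rule mult_carrier_mat[OF Nc])
  qed
  have Sc: "S \<in> carrier_mat n (m*m)" unfolding S_def using P1 P2 P3 P4 by auto
  have V2c: "V2 \<in> carrier_mat n (m*m)" unfolding V2_def using mat_inv_props(1)[OF invK12 dimK] Sc by auto
  have sub: "col_span (hcat3 n V11 V12 V2) \<subseteq> col_span V"
    using span unfolding Let_def V11_def[symmetric] V12_def[symmetric] S_def[symmetric] V2_def[symmetric] .
  obtain Y11 where Y11: "Y11 \<in> carrier_mat r m" "V11 = V * Y11"
    using span_factor[OF V11c dimV hcat3_sub(1)[OF V11c V12c V2c sub]] by blast
  obtain Y12 where Y12: "Y12 \<in> carrier_mat r m" "V12 = V * Y12"
    using span_factor[OF V12c dimV hcat3_sub(2)[OF V11c V12c V2c sub]] by blast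
  obtain Y2 where Y2: "Y2 \<in> carrier_mat r (m*m)" "V2 = V * Y2"
    using span_factor[OF V2c dimV hcat3_sub(3)[OF V11c V12c V2c sub]] by blast
  have iK1: "invertible_mat (mat_adjoint W * K \<sigma>1 * V)" using invKr by auto
  have iK2: "invertible_mat (mat_adjoint W * K \<sigma>2 * V)" using invKr by auto
  have iK12: "invertible_mat (mat_adjoint W * K (\<sigma>1 + \<sigma>2) * V)" using invKr by auto
  define ga where "ga = qb_g1 (red_K K V W) (red_B B W) \<sigma>1"
  define gb where "gb = qb_g1 (red_K K V W) (red_B B W) \<sigma>2"
  have Vga: "V * ga = V11" unfolding ga_def
    using red_g1[where K=K and B=B, OF dimV dimW dimK[of \<sigma>1] dimB[of \<sigma>1] Y11(1) invK1 iK1] Y11(2) unfolding V11_def qb_g1_def by simp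
  have Vgb: "V * gb = V12" unfolding gb_def
    using red_g1[where K=K and B=B, OF dimV dimW dimK[of \<sigma>2] dimB[of \<sigma>2] Y12(1) invK2 iK2] Y12(2) unfolding V12_def qb_g1_def by simp
  have Kr1: "mat_adjoint W * K \<sigma>1 * V \<in> carrier_mat r r" using Wa dimK dimV unfolding Wa_def by auto
  have Kr2: "mat_adjoint W * K \<sigma>2 * V \<in> carrier_mat r r" using Wa dimK dimV unfolding Wa_def by auto
  have gac: "ga \<in> carrier_mat r m" unfolding ga_def qb_g1_def red_K_def red_B_def
    using mat_inv_props(1)[OF iK1 Kr1] Wa dimB unfolding Wa_def by auto
  have gbc: "gb \<in> carrier_mat r m" unfolding gb_def qb_g1_def red_K_def red_B_def
    using mat_inv_props(1)[OF iK2 Kr2] Wa dimB unfolding Wa_def by auto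
  have G1a: "qb_G1 C K B \<sigma>1 = qb_G1 (red_C C V) (red_K K V W) (red_B B W) \<sigma>1"
    unfolding qb_G1_def red_C_def ga_def[symmetric]
    using assoc_mult_mat[OF dimC[of \<sigma>1] dimV gac] Vga unfolding V11_def qb_g1_def by simp
  have G1b: "qb_G1 C K B \<sigma>2 = qb_G1 (red_C C V) (red_K K V W) (red_B B W) \<sigma>2"
    unfolding qb_G1_def red_C_def gb_def[symmetric]
    using assoc_mult_mat[OF dimC[of \<sigma>2] dimV gbc] Vgb unfolding V12_def qb_g1_def by simp
  have T1: "red_H H V W \<sigma>1 \<sigma>2 * kron ga gb = Wa * (H \<sigma>1 \<sigma>2 * kron V11 V12)"
    unfolding red_H_def Wa_def[symmetric]
    using term_eq[OF Wa dimH[of \<sigma>1 \<sigma>2] dimV dimV gac gbc] Vga Vgb by simp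
  have T2: "red_H H V W \<sigma>2 \<sigma>1 * kron gb ga = Wa * (H \<sigma>2 \<sigma>1 * kron V12 V11)"
    unfolding red_H_def Wa_def[symmetric]
    using term_eq[OF Wa dimH[of \<sigma>2 \<sigma>1] dimV dimV gbc gac] Vga Vgb by simp
  have T3: "red_N m N V W \<sigma>1 * kron (1\<^sub>m m) ga = Wa * (N \<sigma>1 * kron (1\<^sub>m m) V11)"
    unfolding red_N_def Wa_def[symmetric]
    using term_eq[OF Wa Nc[of \<sigma>1] one_carrier_mat dimV one_carrier_mat gac] Vga by simp
  have T4: "red_N m N V W \<sigma>2 * kron (1\<^sub>m m) gb = Wa * (N \<sigma>2 * kron (1\<^sub>m m) V12)"
    unfolding red_N_def Wa_def[symmetric]
    using term_eq[OF Wa Nc[of \<sigma>2] one_carrier_mat dimV one_carrier_mat gbc] Vgb by simp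
  have sumeq: "Wa * (H \<sigma>1 \<sigma>2 * kron V11 V12) + Wa * (H \<sigma>2 \<sigma>1 * kron V12 V11)
      + Wa * (N \<sigma>1 * kron (1\<^sub>m m) V11) + Wa * (N \<sigma>2 * kron (1\<^sub>m m) V12) = Wa * S"
    unfolding S_def
    using mult_add_distrib_mat[OF Wa add_carrier_mat[OF P3, of "H \<sigma>1 \<sigma>2 * kron V11 V12 + H \<sigma>2 \<sigma>1 * kron V12 V11"] P4]
      mult_add_distrib_mat[OF Wa add_carrier_mat[OF P2, of "H \<sigma>1 \<sigma>2 * kron V11 V12"] P3]
      mult_add_distrib_mat[OF Wa P1 P2] by simp
  have KS: "S = K (\<sigma>1 + \<sigma>2) * V2"
    unfolding V2_def using mat_inv_props[OF invK12 dimK] Sc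
      assoc_mult_mat[OF dimK[of "\<sigma>1+\<sigma>2"] mat_inv_props(1)[OF invK12 dimK] Sc] by simp
  define X where "X = mat_inv (mat_adjoint W * K (\<sigma>1 + \<sigma>2) * V) * (Wa * S)"
  have Kr12: "mat_adjoint W * K (\<sigma>1+\<sigma>2) * V \<in> carrier_mat r r" using Wa dimK dimV unfolding Wa_def by auto
  have Xc: "X \<in> carrier_mat r (m*m)" unfolding X_def using mat_inv_props(1)[OF iK12 Kr12] Wa Sc by auto
  have VX: "V * X = V2" unfolding X_def KS Y2(2) Wa_def
    using proj[OF dimV dimW dimK[of "\<sigma>1+\<sigma>2"] Y2(1) iK12] .
  have g2r: "qb_g2 m (red_K K V W) (red_B B W) (red_N m N V W) (red_H H V W) \<sigma>1 \<sigma>2 = (1/2) \<cdot>\<^sub>m X"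
    unfolding qb_g2_def ga_def[symmetric] gb_def[symmetric] T1 T2 T3 T4 sumeq X_def
    by (simp add: red_K_def)
  have G2: "qb_G2 m C K B N H \<sigma>1 \<sigma>2
         = qb_G2 m (red_C C V) (red_K K V W) (red_B B W) (red_N m N V W) (red_H H V W) \<sigma>1 \<sigma>2"
  proof -
    have "qb_G2 m (red_C C V) (red_K K V W) (red_B B W) (red_N m N V W) (red_H H V W) \<sigma>1 \<sigma>2
        = C (\<sigma>1+\<sigma>2) * V * ((1/2) \<cdot>\<^sub>m X)" unfolding qb_G2_def g2r red_C_def ..
    also have "\<dots> = C (\<sigma>1+\<sigma>2) * (V * ((1/2) \<cdot>\<^sub>m X))"
      using assoc_mult_mat[OF dimC[of "\<sigma>1+\<sigma>2"] dimV, of "(1/2) \<cdot>\<^sub>m X" "m*m"] Xc by auto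
    also have "V * ((1/2) \<cdot>\<^sub>m X) = (1/2) \<cdot>\<^sub>m V2"
      using mult_smult_distrib[OF dimV Xc] VX by simp
    also have "(1/2) \<cdot>\<^sub>m V2 = qb_g2 m K B N H \<sigma>1 \<sigma>2"
      unfolding qb_g2_def qb_g1_def V2_def S_def V11_def V12_def ..
    finally show ?thesis unfolding qb_G2_def by simp
  qed
  show ?thesis using G1a G1b G2 by blast
qed
end
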